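(* In the multiple zeta setting, $\mathfrak{h}^0[t]$ is closed under the $t$-harmonic product $\star_t$, and $Z^t=Z\circ S^t\colon(\mathfrak{h}^0[t],\star_t)\to\mathbb{R}[t]$ is a $\mathbb{Q}[t]$-algebra homomorphism.
   Context: Multiple zeta setting: $A=\{z_k\mid k=1,2,\ldots\}$, $\mathfrak{h}^1$ is the non-commutative polynomial algebra over $\mathbb{Q}$ in the letters $z_k$ (words are finite sequences of letters, $1$ the empty word), and $\mathfrak{z}$ its $\mathbb{Q}$-span of letters with product $z_k\circ z_l=z_{k+l}$, acting on $\mathfrak{h}^1$ by $a\circ 1=0$, $a\circ(bw)=(a\circ b)w$ ($a,b$ letters, $w$ a word), extended bilinearly. Let $\mathfrak{h}^0=\mathbb{Q}\oplus\bigoplus_{k\geq 2}z_k\mathfrak{h}^1$. Let $Z\colon\mathfrak{h}^0[t]\to\mathbb{R}[t]$ be the $\mathbb{Q}[t]$-linear map with $Z(1)=1$ and $Z(z_{k_1}\cdots z_{k_n})=\zeta(k_1,\ldots,k_n)=\sum_{m_1>\cdots>m_n>0}m_1^{-k_1}\cdots m_n^{-k_n}$ ($k_1\ge2$). The $\mathbb{Q}[t]$-linear operator $S^t$ on $\mathfrak{h}^1[t]$ is given by $S^t(1)=1$, $S^t(aw)=aS^t(w)+t\,a\circ S^t(w)$. The $t$-harmonic product $\star_t$ on $\mathfrak{h}^1[t]$ is the $\mathbb{Q}[t]$-bilinear product with $1\star_t w=w\star_t 1=w$ and $(aw)\star_t(bw')=a(w\star_t bw')+b(aw\star_t w')+(1-2t)(a\circ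 b)(w\star_t w')+(t^2-t)(a\circ b)\circ(w\star_t w')$ for letters $a,b$ and words $w,w'$. *)

theory Defs
  imports "HOL-Analysis.Analysis" "HOL-Computational_Algebra.Polynomial"
begin

text \<open>Words in the letters z_k (k >= 1) are represented by lists of naturals
(the list [k1,...,kn] is the word z_k1 ... z_kn; the empty list is the empty word 1).
An element of h^1[t] is a finitely supported function from words to Q[t]
(rat poly), supported on words whose letters are all >= 1.\<close>

type_synonym elem = "nat list \<Rightarrow> rat poly"

definition supp :: "elem \<Rightarrow> nat list set" where
  "supp x = {w. x w \<noteq> 0}"

definition h1t :: "elem set" where
  "h1t = {x. finite (supp x) \<and> (\<forall>w\<in>supp x. \<forall>k\<in>set w. 1 \<le> k)}"

definition h0t :: "elem set" where
  "h0t = {x. x \<in> h1t \<and> (\<forall>w\<in>supp x. w = [] \<or> 2 \<le> hd w)}"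

definition wd :: "nat list \<Rightarrow> elem" where
  "wd w = (\<lambda>v. if v = w then 1 else 0)"

definition lin :: "(nat list \<Rightarrow> elem) \<Rightarrow> elem \<Rightarrow> elem" where
  "lin f x = (\<lambda>v. \<Sum>w\<in>supp x. x w * f w v)"

definition tt :: "rat poly" where
  "tt = [:0, 1:]"

definition scal :: "rat poly \<Rightarrow> elem \<Rightarrow> elem" where
  "scal c x = (\<lambda>v. c * x v)"

definition addf :: "elem \<Rightarrow> elem \<Rightarrow> elem" where
  "addf x y = (\<lambda>v. x v + y v)"

definition lmul :: "nat \<Rightarrow> elem \<Rightarrow> elem" where
  "lmul a x = lin (\<lambda>w. wd (a # w)) x"

fun circw :: "nat \<Rightarrow> nat list \<Rightarrow> elem" where
  "circw c [] = (\<lambda>_. 0)"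
| "circw c (b # u) = wd ((c + b) # u)"

definition circ :: "nat \<Rightarrow> elem \<Rightarrow> elem" where
  "circ c x = lin (circw c) x"

fun Sw :: "nat list \<Rightarrow> elem" where
  "Sw [] = wd []"
| "Sw (a # w) = addf (lmul a (Sw w)) (scal tt (circ a (Sw w)))"

definition St :: "elem \<Rightarrow> elem" where
  "St x = lin Sw x"

fun starw :: "nat list \<Rightarrow> nat list \<Rightarrow> elem" where
  "starw [] w' = wd w'"
| "starw (a # w) [] = wd (a # w)"
| "starw (a # w) (b # w') =
     addf (addf (lmul a (starw w (b # w'))) (lmul b (starw (a # w) w')))
          (addf (scal (1 - 2 * tt) (lmul (a + b) (starw w w')))
                (scal (tt ^ 2 - tt) (circ (a + b) (starw w w'))))"

definition starT :: "elem \<Rightarrow> elem \<Rightarrow> elem" where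
  "starT x y = (\<lambda>v. \<Sum>w\<in>supp x. \<Sum>w'\<in>supp y. x w * y w' * starw w w' v)"

definition mzv :: "nat list \<Rightarrow> real" where
  "mzv ks = infsum (\<lambda>ms. \<Prod>i<length ks. 1 / (real (ms ! i) ^ (ks ! i)))
     {ms. length ms = length ks \<and> sorted_wrt (>) ms \<and> (\<forall>m\<in>set ms. 0 < m)}"

definition Z :: "elem \<Rightarrow> real poly" where
  "Z x = (\<Sum>w\<in>supp x. smult (mzv w) (map_poly of_rat (x w)))"

definition Zt :: "elem \<Rightarrow> real poly" where
  "Zt x = Z (St x)"

end

theory Submission
  imports Defs
begin


definition hh :: "rat poly \<Rightarrow> real poly" where "hh = map_poly of_rat"

lemma hh_0[simp]: "hh 0 = 0" by (simp add: hh_def)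
lemma hh_1[simp]: "hh 1 = 1" by (simp add: hh_def)
lemma hh_add: "hh (p + q) = hh p + hh q"
  by (rule poly_eqI) (simp add: hh_def coeff_map_poly of_rat_add)
lemma hh_diff: "hh (p - q) = hh p - hh q"
  by (rule poly_eqI) (simp add: hh_def coeff_map_poly of_rat_diff)
lemma hh_mult: "hh (p * q) = hh p * hh q"
  by (rule poly_eqI) (simp add: hh_def coeff_map_poly coeff_mult of_rat_sum of_rat_mult)
lemma hh_tt: "hh tt = [:0,1:]"
  by (simp add: hh_def tt_def map_poly_pCons)

definition Fn :: "(nat list \<Rightarrow> real poly) \<Rightarrow> elem \<Rightarrow> real poly" where
  "Fn g x = (\<Sum>w\<in>supp x. hh (x w) * g w)"

lemma Fn_superset:
  assumes "finite U" "supp x \<subseteq> U"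
  shows "Fn g x = (\<Sum>w\<in>U. hh (x w) * g w)"
  unfolding Fn_def
  by (rule sum.mono_neutral_left[OF assms]) (auto simp: supp_def)

lemma supp_wd[simp]: "supp (wd u) = {u}" by (auto simp: supp_def wd_def)

lemma Fn_wd[simp]: "Fn g (wd u) = g u" unfolding Fn_def supp_wd by (simp add: wd_def)

lemma supp_zero[simp]: "supp (\<lambda>_. 0) = {}" by (simp add: supp_def)
lemma Fn_zero[simp]: "Fn g (\<lambda>_. 0) = 0" by (simp add: Fn_def)

lemma supp_addf: "supp (addf x y) \<subseteq> supp x \<union> supp y"
  by (auto simp: supp_def addf_def)
lemma supp_scal: "supp (scal c x) \<subseteq> supp x"
  by (auto simp: supp_def scal_def)
lemma supp_lin: "supp (lin f x) \<subseteq> (\<Union>w\<in>supp x. supp (f w))"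
proof
  fix v assume "v \<in> supp (lin f x)"
  then have "(\<Sum>w\<in>supp x. x w * f w v) \<noteq> 0" by (simp add: supp_def lin_def)
  then obtain w where "w \<in> supp x" "x w * f w v \<noteq> 0" by (meson sum.neutral)
  then show "v \<in> (\<Union>w\<in>supp x. supp (f w))" by (auto simp: supp_def)
qed

lemma Fn_add:
  assumes "finite (supp x)" "finite (supp y)"
  shows "Fn g (addf x y) = Fn g x + Fn g y"
proof -
  let ?U = "supp x \<union> supp y"
  have "Fn g (addf x y) = (\<Sum>w\<in>?U. hh (addf x y w) * g w)"
    using assms supp_addf by (intro Fn_superset) auto
  also have "\<dots> = (\<Sum>w\<in>?U. hh (x w) * g w) + (\<Sum>w\<in>?U. hh (y w) * g w)"
    by (simp add: addf_def hh_add distrib_right sum.distrib)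
  also have "\<dots> = Fn g x + Fn g y"
    using assms by (simp add: Fn_superset[of ?U x] Fn_superset[of ?U y])
  finally show ?thesis .
qed

lemma Fn_scal:
  assumes "finite (supp x)"
  shows "Fn g (scal c x) = hh c * Fn g x"
proof -
  have "Fn g (scal c x) = (\<Sum>w\<in>supp x. hh (scal c x w) * g w)"
    using assms supp_scal by (intro Fn_superset) auto
  then show ?thesis by (simp add: scal_def hh_mult Fn_def sum_distrib_left mult.assoc)
qed

lemma finite_supp_lin:
  assumes "finite (supp x)" "\<And>w. w \<in> supp x \<Longrightarrow> finite (supp (f w))"
  shows "finite (supp (lin f x))"
  using assms supp_lin by (meson finite_UN_I finite_subset)

lemma Fn_lin:
  assumes "finite (supp x)" "\<And>w. w \<in> supp x \<Longrightarrow> finite (supp (f w))"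
  shows "Fn g (lin f x) = (\<Sum>w\<in>supp x. hh (x w) * Fn g (f w))"
proof -
  let ?U = "\<Union>w\<in>supp x. supp (f w)"
  have fU: "finite ?U" using assms by auto
  have "Fn g (lin f x) = (\<Sum>v\<in>?U. hh (lin f x v) * g v)"
    using fU supp_lin by (intro Fn_superset) auto
  also have "\<dots> = (\<Sum>v\<in>?U. \<Sum>w\<in>supp x. hh (x w) * (hh (f w v) * g v))"
  proof (rule sum.cong[OF refl])
    fix v
    have "hh (lin f x v) = (\<Sum>w\<in>supp x. hh (x w) * hh (f w v))"
      unfolding lin_def using assms(1)
      by (induction rule: finite_induct) (simp_all add: hh_add hh_mult)
    then show "hh (lin f x v) * g v = (\<Sum>w\<in>supp x. hh (x w) * (hh (f w v) * g v))"
      by (simp add: sum_distrib_right mult.assoc)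
  qed
  also have "\<dots> = (\<Sum>w\<in>supp x. hh (x w) * (\<Sum>v\<in>?U. hh (f w v) * g v))"
    by (subst sum.swap) (simp add: sum_distrib_left)
  also have "\<dots> = (\<Sum>w\<in>supp x. hh (x w) * Fn g (f w))"
    by (rule sum.cong[OF refl], subst Fn_superset[OF fU]) auto
  finally show ?thesis .
qed


definition l1 :: "nat list \<Rightarrow> bool" where "l1 w = (\<forall>k\<in>set w. 1 \<le> k)"

lemma supp_lmul_mem: "v \<in> supp (lmul a x) \<Longrightarrow> \<exists>u. v = a # u \<and> u \<in> supp x"
  using supp_lin[of "\<lambda>w. wd (a # w)" x] unfolding lmul_def by auto

lemma supp_circw: "supp (circw c w) \<subseteq> (case w of [] \<Rightarrow> {} | b # u \<Rightarrow> {(c + b) # u})"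
  by (cases w) auto

lemma supp_circ_mem: "v \<in> supp (circ c x) \<Longrightarrow> \<exists>b u. v = (c + b) # u \<and> b # u \<in> supp x"
proof -
  assume "v \<in> supp (circ c x)"
  then obtain w where w: "w \<in> supp x" "v \<in> supp (circw c w)"
    using supp_lin[of "circw c" x] unfolding circ_def by auto
  then show ?thesis by (cases w) auto
qed

lemma finite_supp_lmul: "finite (supp x) \<Longrightarrow> finite (supp (lmul a x))"
  unfolding lmul_def by (rule finite_supp_lin) auto

lemma finite_supp_circw: "finite (supp (circw c w))"
  by (cases w) auto

lemma finite_supp_circ: "finite (supp x) \<Longrightarrow> finite (supp (circ a x))"
  unfolding circ_def by (rule finite_supp_lin) (auto simp: finite_supp_circw)

lemma finite_supp_addf: "finite (supp x) \<Longrightarrow> finite (supp y) \<Longrightarrow> finite (supp (addf x y))"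
  by (meson finite_Un finite_subset supp_addf)

lemma finite_supp_scal: "finite (supp x) \<Longrightarrow> finite (supp (scal c x))"
  by (meson finite_subset supp_scal)

lemmas finite_supps = finite_supp_lmul finite_supp_circ finite_supp_addf finite_supp_scal

lemma finite_supp_Sw: "finite (supp (Sw w))"
  by (induction w) (auto intro!: finite_supps)

lemma Sw_props:
  "\<forall>v\<in>supp (Sw w). (l1 w \<longrightarrow> l1 v) \<and> (w = [] \<longrightarrow> v = []) \<and> (w \<noteq> [] \<longrightarrow> v \<noteq> [] \<and> hd w \<le> hd v)"
proof (induction w)
  case Nil then show ?case by simp
next
  case (Cons a w)
  show ?case
  proof
    fix v assume v: "v \<in> supp (Sw (a # w))"
    then have "v \<in> supp (lmul a (Sw w)) \<or> v \<in> supp (circ a (Sw w))"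
      using supp_addf supp_scal by fastforce
    then show "(l1 (a # w) \<longrightarrow> l1 v) \<and> (a # w = [] \<longrightarrow> v = []) \<and> (a # w \<noteq> [] \<longrightarrow> v \<noteq> [] \<and> hd (a # w) \<le> hd v)"
    proof
      assume "v \<in> supp (lmul a (Sw w))"
      then obtain u where "v = a # u" "u \<in> supp (Sw w)" using supp_lmul_mem by blast
      then show ?thesis using Cons by (auto simp: l1_def)
    next
      assume "v \<in> supp (circ a (Sw w))"
      then obtain b u where "v = (a + b) # u" "b # u \<in> supp (Sw w)" using supp_circ_mem by blast
      then show ?thesis using Cons by (auto simp: l1_def)
    qed
  qed
qed

lemma supp_starw3:
  "supp (starw (a # w) (b # w')) \<subseteq> supp (lmul a (starw w (b # w'))) \<union> supp (lmul b (starw (a # w) w'))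
      \<union> supp (lmul (a + b) (starw w w')) \<union> supp (circ (a + b) (starw w w'))"
  unfolding starw.simps by (auto simp: supp_def addf_def scal_def)

lemma starw_props:
  "finite (supp (starw u v)) \<and> (l1 u \<longrightarrow> l1 v \<longrightarrow> (\<forall>p\<in>supp (starw u v). l1 p))"
proof (induction u v rule: starw.induct)
  case (1 w') then show ?case by simp
next
  case (2 a w) then show ?case by simp
next
  case (3 a w b w')
  let ?P1 = "starw w (b # w')" and ?P2 = "starw (a # w) w'" and ?P3 = "starw w w'"
  have "finite (supp (lmul a ?P1) \<union> supp (lmul b ?P2) \<union> supp (lmul (a + b) ?P3) \<union> supp (circ (a + b) ?P3))"
  proof -
    have f: "finite (supp ?P1)" "finite (supp ?P2)" "finite (supp ?P3)"
      using conjunct1[OF 3(1)] conjunct1[OF 3(2)] conjunct1[OF 3(3)] by -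
    show ?thesis by (intro finite_UnI finite_supp_lmul finite_supp_circ f)
  qed
  then have fin: "finite (supp (starw (a # w) (b # w')))"
    by (rule finite_subset[OF supp_starw3])
  moreover have "\<forall>p\<in>supp (starw (a # w) (b # w')). l1 p" if "l1 (a # w)" "l1 (b # w')"
  proof
    fix p assume p: "p \<in> supp (starw (a # w) (b # w'))"
    have l: "l1 (b # w')" "l1 w" "l1 (a # w)" "l1 w'" using that by (auto simp: l1_def)
    have "p \<in> supp (lmul a ?P1) \<or> p \<in> supp (lmul b ?P2) \<or> p \<in> supp (lmul (a + b) ?P3)
        \<or> p \<in> supp (circ (a + b) ?P3)"
      using subsetD[OF supp_starw3 p] by (simp only: Un_iff disj_assoc)
    then show "l1 p"
    proof (elim disjE)
      assume "p \<in> supp (lmul a ?P1)"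
      then obtain u where "p = a # u" "u \<in> supp ?P1" using supp_lmul_mem by blast
      then show ?thesis using 3(1) l unfolding l1_def by fastforce
    next
      assume "p \<in> supp (lmul b ?P2)"
      then obtain u where "p = b # u" "u \<in> supp ?P2" using supp_lmul_mem by blast
      then show ?thesis using 3(2) l unfolding l1_def by fastforce
    next
      assume "p \<in> supp (lmul (a + b) ?P3)"
      then obtain u where "p = (a + b) # u" "u \<in> supp ?P3" using supp_lmul_mem by blast
      then show ?thesis using 3(3) l unfolding l1_def by fastforce
    next
      assume "p \<in> supp (circ (a + b) ?P3)"
      then obtain c u where "p = (a + b + c) # u" "c # u \<in> supp ?P3" using supp_circ_mem by blast
      then show ?thesis using 3(3) l unfolding l1_def by fastforce
    qed
  qed
  ultimately show ?case by blast
qed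

lemma starw_hd:
  assumes "p \<in> supp (starw (a # w) (b # w'))"
  shows "\<exists>c u. p = c # u \<and> (a \<le> c \<or> b \<le> c)"
proof -
  have "p \<in> supp (lmul a (starw w (b # w'))) \<or> p \<in> supp (lmul b (starw (a # w) w'))
      \<or> p \<in> supp (lmul (a + b) (starw w w')) \<or> p \<in> supp (circ (a + b) (starw w w'))"
    using subsetD[OF supp_starw3 assms] by (simp only: Un_iff disj_assoc)
  then show ?thesis by (elim disjE) (auto dest!: supp_lmul_mem supp_circ_mem)
qed


fun zN :: "nat \<Rightarrow> nat list \<Rightarrow> real" where
  "zN N [] = 1"
| "zN 0 (a # w) = 0"
| "zN (Suc N) (a # w) = zN N (a # w) + (1 / real (Suc N)) ^ a * zN N w"

definition phiN :: "nat \<Rightarrow> nat list \<Rightarrow> real poly" where "phiN N w = [:zN N w:]"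
definition psiN :: "nat \<Rightarrow> nat list \<Rightarrow> real poly" where "psiN N u = Fn (phiN N) (Sw u)"
definition Gam :: "nat \<Rightarrow> elem \<Rightarrow> real poly" where "Gam N x = Fn (psiN N) x"
definition nc :: "nat \<Rightarrow> nat \<Rightarrow> real poly" where "nc N c = [:(1 / real (Suc N)) ^ c:]"
definition TT :: "real poly" where "TT = [:0, 1:]"

lemma pC_add: "[:x + y:] = [:x:] + [:y::real:]" by simp
lemma pC_mult: "[:x * y:] = [:x:] * [:y::real:]" by simp
lemma pC_diff: "[:x - y:] = [:x:] - [:y::real:]" by simp

lemma nc_add: "nc N (c + d) = nc N c * nc N d"
  by (simp add: nc_def power_add)

lemma sum_lin1:
  "(\<Sum>w\<in>S. h w * (f w + k * g w)) = (\<Sum>w\<in>S. h w * f w) + k * (\<Sum>w\<in>S. h w * (g w :: real poly))"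
  by (simp add: algebra_simps sum.distrib sum_distrib_left)

lemma sum_lin2:
  "(\<Sum>w\<in>S. h w * (f w - g w)) = (\<Sum>w\<in>S. h w * f w) - (\<Sum>w\<in>S. h w * (g w :: real poly))"
  by (simp add: algebra_simps sum_subtractf)

lemma sum_lin3:
  "(\<Sum>w\<in>S. h w * (f w + k * (g w + T * (e w - g w)))) =
   (\<Sum>w\<in>S. h w * f w) + k * ((\<Sum>w\<in>S. h w * g w) + T * ((\<Sum>w\<in>S. h w * e w) - (\<Sum>w\<in>S. h w * (g w :: real poly))))"
  by (simp add: algebra_simps sum.distrib sum_distrib_left sum_subtractf)


lemma phi_lmul:
  assumes "finite (supp q)"
  shows "Fn (phiN (Suc N)) (lmul c q) = Fn (phiN N) (lmul c q) + nc N c * Fn (phiN N) q"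
proof -
  have e: "Fn (phiN M) (lmul c q) = (\<Sum>w\<in>supp q. hh (q w) * phiN M (c # w))" for M
    unfolding lmul_def using assms by (subst Fn_lin) auto
  show ?thesis
    unfolding e unfolding Fn_def phiN_def zN.simps pC_add pC_mult sum_lin1 nc_def ..
qed

lemma phi0_lmul:
  assumes "finite (supp q)"
  shows "Fn (phiN 0) (lmul c q) = 0"
  unfolding lmul_def using assms by (subst Fn_lin) (auto simp: phiN_def)

lemma phi_circw:
  "Fn (phiN (Suc N)) (circw c w) - Fn (phiN N) (circw c w) = nc N c * (phiN (Suc N) w - phiN N w)"
proof (cases w)
  case Nil then show ?thesis by (simp add: phiN_def)
next
  case (Cons d u)
  have "zN (Suc N) ((c + d) # u) - zN N ((c + d) # u) = (1 / real (Suc N)) ^ c * (zN (Suc N) (d # u) - zN N (d # u))"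
    by (simp only: zN.simps power_add) (simp add: algebra_simps)
  then show ?thesis using Cons by (simp only: circw.simps Fn_wd phiN_def nc_def pC_diff[symmetric] pC_mult[symmetric])
qed

lemma phi0_circw: "Fn (phiN 0) (circw c w) = 0"
  by (cases w) (simp_all add: phiN_def)


lemma phi_circ:
  assumes "finite (supp q)"
  shows "Fn (phiN (Suc N)) (circ c q) = Fn (phiN N) (circ c q) + nc N c * (Fn (phiN (Suc N)) q - Fn (phiN N) q)"
proof -
  have e: "Fn (phiN M) (circ c q) = (\<Sum>w\<in>supp q. hh (q w) * Fn (phiN M) (circw c w))" for M
    unfolding circ_def using assms by (subst Fn_lin) (auto simp: finite_supp_circw)
  have "Fn (phiN (Suc N)) (circ c q) - Fn (phiN N) (circ c q) = nc N c * (Fn (phiN (Suc N)) q - Fn (phiN N) q)"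
    unfolding e sum_lin2[symmetric] phi_circw unfolding Fn_def sum_lin2[symmetric] sum_distrib_left
    by (rule sum.cong) (auto simp: mult.left_commute)
  then show ?thesis by (simp add: algebra_simps)
qed

lemma phi0_circ:
  assumes "finite (supp q)"
  shows "Fn (phiN 0) (circ c q) = 0"
  unfolding circ_def using assms by (subst Fn_lin) (auto simp: finite_supp_circw phi0_circw)

lemma hh_tt': "hh tt = TT" by (simp add: hh_tt TT_def)

lemma Sw_cons_Fn:
  "Fn g (Sw (c # w)) = Fn g (lmul c (Sw w)) + TT * Fn g (circ c (Sw w))"
  by (simp add: Fn_add Fn_scal finite_supps finite_supp_Sw hh_tt')

lemma psi_Nil[simp]: "psiN N [] = 1"
  by (simp add: psiN_def phiN_def)

lemma psi0_cons: "psiN 0 (c # w) = 0"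
  unfolding psiN_def Sw_cons_Fn by (simp add: phi0_lmul phi0_circ finite_supp_Sw)

lemma psi_Suc_cons:
  "psiN (Suc N) (c # w) = psiN N (c # w) + nc N c * (psiN N w + TT * (psiN (Suc N) w - psiN N w))"
  unfolding psiN_def Sw_cons_Fn phi_lmul[OF finite_supp_Sw] phi_circ[OF finite_supp_Sw]
  by (simp add: algebra_simps)


lemma Gam_wd[simp]: "Gam N (wd u) = psiN N u" by (simp add: Gam_def)

lemma Gam_lmul_Suc:
  assumes "finite (supp p)"
  shows "Gam (Suc N) (lmul c p) = Gam N (lmul c p) + nc N c * (Gam N p + TT * (Gam (Suc N) p - Gam N p))"
proof -
  have e: "Gam M (lmul c p) = (\<Sum>w\<in>supp p. hh (p w) * psiN M (c # w))" for M
    unfolding lmul_def Gam_def using assms by (subst Fn_lin) auto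
  show ?thesis unfolding e psi_Suc_cons sum_lin3 unfolding Gam_def Fn_def ..
qed

lemma Gam0_lmul:
  assumes "finite (supp p)"
  shows "Gam 0 (lmul c p) = 0"
  unfolding lmul_def Gam_def using assms by (subst Fn_lin) (auto simp: psi0_cons)

lemma Gam_circw:
  "Gam (Suc N) (circw c w) - Gam N (circw c w) = nc N c * (psiN (Suc N) w - psiN N w)"
proof (cases w)
  case Nil then show ?thesis by (simp add: Gam_def)
next
  case (Cons d u)
  then show ?thesis by (simp add: psi_Suc_cons nc_add algebra_simps)
qed

lemma Gam0_circw: "Gam 0 (circw c w) = 0"
  by (cases w) (simp_all add: Gam_def psi0_cons)

lemma Gam_circ_Suc:
  assumes "finite (supp p)"
  shows "Gam (Suc N) (circ c p) = Gam N (circ c p) + nc N c * (Gam (Suc N) p - Gam N p)"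
proof -
  have e: "Gam M (circ c p) = (\<Sum>w\<in>supp p. hh (p w) * Gam M (circw c w))" for M
    unfolding circ_def using assms by (subst Gam_def, subst Fn_lin) (auto simp: finite_supp_circw Gam_def)
  have "Gam (Suc N) (circ c p) - Gam N (circ c p) = nc N c * (Gam (Suc N) p - Gam N p)"
    unfolding e sum_lin2[symmetric] Gam_circw unfolding Gam_def Fn_def sum_lin2[symmetric] sum_distrib_left
    by (rule sum.cong) (auto simp: mult.left_commute)
  then show ?thesis by (simp add: algebra_simps)
qed

lemma Gam0_circ:
  assumes "finite (supp p)"
  shows "Gam 0 (circ c p) = 0"
proof -
  have "Gam 0 (circ c p) = (\<Sum>w\<in>supp p. hh (p w) * Gam 0 (circw c w))"
    unfolding circ_def using assms by (subst Gam_def, subst Fn_lin) (auto simp: finite_supp_circw Gam_def)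
  then show ?thesis by (simp add: Gam0_circw)
qed

lemma Gam_add: "finite (supp x) \<Longrightarrow> finite (supp y) \<Longrightarrow> Gam N (addf x y) = Gam N x + Gam N y"
  by (simp add: Gam_def Fn_add)
lemma Gam_scal: "finite (supp x) \<Longrightarrow> Gam N (scal c x) = hh c * Gam N x"
  by (simp add: Gam_def Fn_scal)

lemma hh_2: "hh 2 = 2"
  by (metis hh_1 hh_add one_add_one)

lemma hh_c1: "hh (1 - 2 * tt) = 1 - 2 * TT"
  by (simp add: hh_diff hh_mult hh_2 hh_tt')
lemma hh_c2: "hh (tt ^ 2 - tt) = TT ^ 2 - TT"
  by (simp add: hh_diff hh_mult hh_tt' power2_eq_square)

lemma starw3_expand:
  assumes "finite (supp P1)" "finite (supp P2)" "finite (supp P3)"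
  shows "Gam M (addf (addf (lmul a P1) (lmul b P2))
          (addf (scal (1 - 2 * tt) (lmul (a + b) P3)) (scal (tt ^ 2 - tt) (circ (a + b) P3))))
   = Gam M (lmul a P1) + Gam M (lmul b P2) + (1 - 2 * TT) * Gam M (lmul (a + b) P3)
     + (TT ^ 2 - TT) * Gam M (circ (a + b) P3)"
  using assms by (simp add: Gam_add Gam_scal finite_supps hh_c1 hh_c2)

lemma key_identity:
  fixes X Y A B A' B' X' Y' na nb T :: "'a :: comm_ring_1"
  assumes "X' = X + na * (A + T * (A' - A))" "Y' = Y + nb * (B + T * (B' - B))"
  shows "X * Y + na * (A * Y + T * (A' * Y' - A * Y)) + nb * (X * B + T * (X' * B' - X * B))
     + (1 - 2 * T) * (na * nb * (A * B + T * (A' * B' - A * B)))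
     + (T ^ 2 - T) * (na * nb * (A' * B' - A * B)) = X' * Y'"
  unfolding assms by (simp add: algebra_simps power2_eq_square)


lemma fin_starw: "finite (supp (starw u v))" using starw_props by blast

lemma Gam_starw: "Gam N (starw u v) = psiN N u * psiN N v"
proof (induction N arbitrary: u v)
  case 0
  show ?case
  proof (induction u v rule: starw.induct)
    case (1 w') then show ?case by simp
  next
    case (2 a w) then show ?case by simp
  next
    case (3 a w b w')
    show ?case
      unfolding starw.simps(3) starw3_expand[OF fin_starw fin_starw fin_starw]
      by (simp add: Gam0_lmul Gam0_circ fin_starw psi0_cons)
  qed
next
  case (Suc N)
  show ?case
  proof (induction u v rule: starw.induct)
    case (1 w') then show ?case by simp
  next
    case (2 a w) then show ?case by simp
  next
    case (3 a w b w')
    let ?P1 = "starw w (b # w')" and ?P2 = "starw (a # w) w'" and ?P3 = "starw w w'"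
    let ?Q = "starw (a # w) (b # w')"
    have G: "Gam (Suc N) ?Q = Gam N ?Q
       + nc N a * (Gam N ?P1 + TT * (Gam (Suc N) ?P1 - Gam N ?P1))
       + nc N b * (Gam N ?P2 + TT * (Gam (Suc N) ?P2 - Gam N ?P2))
       + (1 - 2 * TT) * (nc N a * nc N b * (Gam N ?P3 + TT * (Gam (Suc N) ?P3 - Gam N ?P3)))
       + (TT ^ 2 - TT) * (nc N a * nc N b * (Gam (Suc N) ?P3 - Gam N ?P3))"
      unfolding starw.simps(3) starw3_expand[OF fin_starw fin_starw fin_starw]
        Gam_lmul_Suc[OF fin_starw] Gam_circ_Suc[OF fin_starw] nc_add
      by (simp add: algebra_simps)
    show ?case
      unfolding G Suc.IH 3
      by (rule key_identity) (simp_all add: psi_Suc_cons)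
  qed
qed


lemma zN_nonneg: "0 \<le> zN N w"
  by (induction N w rule: zN.induct) auto

lemma zN_Suc_ge: "zN N w \<le> zN (Suc N) w"
  by (cases w) (auto intro!: mult_nonneg_nonneg zN_nonneg)

lemma zN_incseq: "incseq (\<lambda>N. zN N w)"
  by (rule incseq_SucI) (rule zN_Suc_ge)

lemma zN_cmp: "list_all2 (\<lambda>x y. y \<le> x) v w \<Longrightarrow> zN N v \<le> zN N w"
proof (induction N arbitrary: v w)
  case 0 then show ?case by (cases v; cases w) auto
next
  case (Suc N)
  show ?case
  proof (cases v)
    case Nil then show ?thesis using Suc.prems by simp
  next
    case (Cons a v')
    then obtain b w' where w: "w = b # w'" "b \<le> a" "list_all2 (\<lambda>x y. y \<le> x) v' w'"
      using Suc.prems by (cases w) auto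
    have "(1 / real (Suc N)) ^ a \<le> (1 / real (Suc N)) ^ b"
      by (rule power_decreasing) (auto simp: w)
    then have "(1 / real (Suc N)) ^ a * zN N v' \<le> (1 / real (Suc N)) ^ b * zN N w'"
      using Suc.IH[OF w(3)] by (intro mult_mono) (auto simp: zN_nonneg)
    moreover have "zN N (a # v') \<le> zN N (b # w')"
      using Suc.IH[of "a # v'" "b # w'"] w by simp
    ultimately show ?thesis using Cons w by simp
  qed
qed

lemma zN_21: "zN N (2 # 1 # r) + (1 / real N) * zN N (1 # r) \<le> zN N (2 # r)"
proof (induction N)
  case 0 then show ?case by simp
next
  case (Suc N)
  define x where "x = 1 / real (Suc N)"
  define X where "X = zN N (1 # r)"
  have X0: "0 \<le> X" by (simp add: X_def zN_nonneg)
  have key: "x ^ 2 * X + x * X \<le> (1 / real N) * X - (1 / real (Suc N)) * (x * zN N r) + (1/real (Suc N)) * (x * zN N r)"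
  proof (cases "N = 0")
    case True then show ?thesis by (simp add: X_def)
  next
    case False
    have "x ^ 2 = 1 / (real (Suc N) * real (Suc N))" by (simp add: x_def power2_eq_square)
    also have "\<dots> \<le> 1 / (real N * real (Suc N))"
      using False by (intro divide_left_mono mult_right_mono) auto
    also have "\<dots> = 1 / real N - x" using False by (simp add: x_def field_simps)
    finally have "x ^ 2 + x \<le> 1 / real N" by simp
    then have "(x ^ 2 + x) * X \<le> (1 / real N) * X" using X0 by (rule mult_right_mono)
    then show ?thesis by (simp add: algebra_simps)
  qed
  have "zN (Suc N) (2 # 1 # r) + (1 / real (Suc N)) * zN (Suc N) (1 # r)
      = zN N (2 # 1 # r) + x ^ 2 * X + x * (X + x * zN N r)"
    by (simp add: x_def X_def)
  also have "\<dots> \<le> zN N (2 # r) + x ^ 2 * zN N r"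
    using Suc.IH key unfolding x_def X_def by (simp add: algebra_simps power2_eq_square)
  also have "\<dots> = zN (Suc N) (2 # r)" by (simp add: x_def)
  finally show ?case .
qed

lemma zN_2: "zN (Suc N) [2] + 1 / real (Suc N) \<le> 2"
proof (induction N)
  case 0 then show ?case by simp
next
  case (Suc N)
  have "1 / real (Suc (Suc N)) ^ 2 = 1 / (real (Suc (Suc N)) * real (Suc (Suc N)))"
    by (simp add: power2_eq_square)
  also have "\<dots> \<le> 1 / (real (Suc N) * real (Suc (Suc N)))"
    by (intro divide_left_mono mult_right_mono) auto
  also have "\<dots> = 1 / real (Suc N) - 1 / real (Suc (Suc N))" by (simp add: field_simps)
  finally have "1 / real (Suc (Suc N)) ^ 2 \<le> 1 / real (Suc N) - 1 / real (Suc (Suc N))" .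
  then show ?case using Suc.IH by (simp add: power_one_over)
qed

lemma zN_2': "zN N [2] \<le> 2"
proof (cases N)
  case 0 then show ?thesis by simp
next
  case (Suc M) then show ?thesis using zN_2[of M] by (smt (verit) divide_nonneg_nonneg of_nat_0_le_iff)
qed

lemma zN_rep: "zN N (2 # replicate n 1) \<le> 2"
proof (induction n)
  case 0 then show ?case using zN_2' by simp
next
  case (Suc n)
  have "zN N (2 # 1 # replicate n 1) \<le> zN N (2 # replicate n 1)"
    using zN_21[of N "replicate n 1"] zN_nonneg[of N "1 # replicate n 1"]
    by (smt (verit) divide_nonneg_nonneg mult_nonneg_nonneg of_nat_0_le_iff)
  then show ?case using Suc by simp
qed

definition adm :: "nat list \<Rightarrow> bool" where "adm w = (l1 w \<and> (w = [] \<or> 2 \<le> hd w))"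

lemma zN_bound: "adm w \<Longrightarrow> zN N w \<le> 2"
proof (cases w)
  case Nil then show ?thesis by simp
next
  case (Cons c u)
  assume "adm w"
  then have "list_all2 (\<lambda>x y. y \<le> x) (c # u) (2 # replicate (length u) 1)"
    using Cons by (auto simp: adm_def l1_def list_all2_conv_all_nth nth_Cons split: nat.splits)
  then show ?thesis using zN_cmp zN_rep Cons by (metis order_trans)
qed


definition Aset :: "nat \<Rightarrow> nat list \<Rightarrow> nat list set" where
  "Aset N k = {ms. length ms = length k \<and> sorted_wrt (>) ms \<and> (\<forall>m\<in>set ms. 0 < m) \<and> (\<forall>m\<in>set ms. m \<le> N)}"
definition Bset :: "nat list \<Rightarrow> nat list set" where
  "Bset k = {ms. length ms = length k \<and> sorted_wrt (>) ms \<and> (\<forall>m\<in>set ms. 0 < m)}"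
definition fk :: "nat list \<Rightarrow> nat list \<Rightarrow> real" where
  "fk k = (\<lambda>ms. \<Prod>i<length k. 1 / (real (ms ! i) ^ (k ! i)))"

lemma mzv_alt: "mzv k = infsum (fk k) (Bset k)"
  by (simp add: mzv_def fk_def Bset_def)

lemma finite_Aset: "finite (Aset N k)"
proof (rule finite_subset)
  show "Aset N k \<subseteq> {xs. set xs \<subseteq> {0..N} \<and> length xs = length k}"
    by (auto simp: Aset_def)
  show "finite {xs. set xs \<subseteq> {0..N} \<and> length xs = length k}"
    by (rule finite_lists_length_eq) simp
qed

lemma Aset_Nil: "Aset N [] = {[]}" by (auto simp: Aset_def)
lemma Aset_0: "Aset 0 (a # w) = {}" by (auto simp: Aset_def length_Suc_conv)

lemma Aset_Suc_cons: "Aset (Suc N) (a # w) = Aset N (a # w) \<union> (Cons (Suc N)) ` Aset N w"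
proof (rule set_eqI, rule iffI)
  fix ms assume "ms \<in> Aset (Suc N) (a # w)"
  then obtain m ms' where ms: "ms = m # ms'" "length ms' = length w" "\<forall>y\<in>set ms'. y < m"
     "sorted_wrt (>) ms'" "0 < m" "\<forall>y\<in>set ms'. 0 < y" "m \<le> Suc N" "\<forall>y\<in>set ms'. y \<le> Suc N"
    by (auto simp: Aset_def length_Suc_conv)
  show "ms \<in> Aset N (a # w) \<union> (Cons (Suc N)) ` Aset N w"
  proof (cases "m = Suc N")
    case True
    then have "ms' \<in> Aset N w" using ms by (auto simp: Aset_def)
    then show ?thesis using True ms by auto
  next
    case False
    then have "ms \<in> Aset N (a # w)" using ms by (fastforce simp: Aset_def)
    then show ?thesis by auto
  qed
next
  fix ms assume "ms \<in> Aset N (a # w) \<union> (Cons (Suc N)) ` Aset N w"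
  then show "ms \<in> Aset (Suc N) (a # w)"
    by (force simp: Aset_def le_imp_less_Suc intro: le_SucI)
qed

lemma fk_cons: "fk (a # w) (m # ms) = (1 / real m) ^ a * fk w ms"
  unfolding fk_def length_Cons prod.lessThan_Suc_shift by (simp add: power_one_over)

lemma zN_eq_sum: "zN N k = sum (fk k) (Aset N k)"
proof (induction N k rule: zN.induct)
  case (1 N) then show ?case by (simp add: Aset_Nil fk_def)
next
  case (2 a w) then show ?case by (simp add: Aset_0)
next
  case (3 N a w)
  have disj: "Aset N (a # w) \<inter> (Cons (Suc N)) ` Aset N w = {}"
    by (auto simp: Aset_def)
  have "sum (fk (a # w)) (Aset (Suc N) (a # w))
      = sum (fk (a # w)) (Aset N (a # w)) + sum (fk (a # w)) ((Cons (Suc N)) ` Aset N w)"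
    unfolding Aset_Suc_cons by (rule sum.union_disjoint) (auto simp: finite_Aset disj)
  also have "sum (fk (a # w)) ((Cons (Suc N)) ` Aset N w) = (\<Sum>ms\<in>Aset N w. fk (a # w) (Suc N # ms))"
    by (rule sum.reindex[unfolded comp_def]) (auto simp: inj_on_def)
  also have "\<dots> = (1 / real (Suc N)) ^ a * zN N w"
    by (simp add: fk_cons sum_distrib_left 3)
  finally show ?case using 3 by simp
qed

lemma fk_nonneg: "0 \<le> fk k ms"
  by (simp add: fk_def prod_nonneg)

lemma Aset_sub: "Aset N k \<subseteq> Bset k" by (auto simp: Aset_def Bset_def)

lemma finite_in_Aset:
  assumes "finite F" "F \<subseteq> Bset k"
  shows "\<exists>N. F \<subseteq> Aset N k"
proof -
  let ?N = "\<Sum>ms\<in>F. sum_list ms"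
  have "F \<subseteq> Aset ?N k"
  proof
    fix ms assume ms: "ms \<in> F"
    have "\<forall>m\<in>set ms. m \<le> ?N"
    proof
      fix m assume "m \<in> set ms"
      then have "m \<le> sum_list ms" by (simp add: member_le_sum_list)
      also have "sum_list ms \<le> ?N" using ms assms(1) by (intro member_le_sum) auto
      finally show "m \<le> ?N" .
    qed
    then show "ms \<in> Aset ?N k" using ms assms(2) by (auto simp: Aset_def Bset_def)
  qed
  then show ?thesis by blast
qed

lemma mzv_lim:
  assumes "adm k"
  shows "(\<lambda>N. zN N k) \<longlonglongrightarrow> mzv k"
proof -
  have inc: "incseq (\<lambda>N. zN N k)" by (rule zN_incseq)
  have bd: "zN N k \<le> 2" for N using zN_bound[OF assms] .
  obtain L where L: "(\<lambda>N. zN N k) \<longlonglongrightarrow> L"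
    using inc bd by (meson incseq_convergent)
  have le: "zN N k \<le> L" for N using incseq_le[OF inc L] by blast
  have fsum: "sum (fk k) F \<le> L" if F: "finite F" "F \<subseteq> Bset k" for F
  proof -
    obtain N where "F \<subseteq> Aset N k" using finite_in_Aset[OF F] by blast
    then have "sum (fk k) F \<le> sum (fk k) (Aset N k)"
      by (intro sum_mono2 finite_Aset) (auto simp: fk_nonneg)
    also have "\<dots> = zN N k" by (simp add: zN_eq_sum)
    finally show ?thesis using le[of N] by linarith
  qed
  have summ: "fk k summable_on Bset k"
    by (rule nonneg_bdd_above_summable_on) (auto simp: fk_nonneg bdd_above_def intro!: exI[of _ L] fsum)
  have "infsum (fk k) (Bset k) \<le> L"
    by (rule infsum_le_finite_sums[OF summ]) (rule fsum)
  moreover have "zN N k \<le> infsum (fk k) (Bset k)" for N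
    unfolding zN_eq_sum
    by (rule finite_sum_le_infsum[OF summ finite_Aset Aset_sub]) (simp add: fk_nonneg)
  then have "L \<le> infsum (fk k) (Bset k)"
    by (intro LIMSEQ_le_const2[OF L]) auto
  ultimately have "mzv k = L" unfolding mzv_alt by simp
  then show ?thesis using L by simp
qed


definition phiZ :: "nat list \<Rightarrow> real poly" where "phiZ w = [:mzv w:]"
definition psiZ :: "nat list \<Rightarrow> real poly" where "psiZ u = Fn phiZ (Sw u)"

lemma Z_Fn: "Z x = Fn phiZ x"
  unfolding Z_def Fn_def phiZ_def hh_def by (simp add: mult.commute)

lemma St_lin_fin: "finite (supp x) \<Longrightarrow> finite (supp (St x))"
  unfolding St_def by (rule finite_supp_lin) (auto simp: finite_supp_Sw)

lemma Zt_Fn: "finite (supp x) \<Longrightarrow> Zt x = Fn psiZ x"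
  unfolding Zt_def Z_Fn St_def
  by (subst Fn_lin) (auto simp: finite_supp_Sw psiZ_def Fn_def[of psiZ])

lemma poly_Fn: "poly (Fn g x) s = (\<Sum>w\<in>supp x. poly (hh (x w)) s * poly (g w) s)"
  by (simp add: Fn_def poly_sum)

lemma Fn_tendsto:
  assumes "\<And>w. w \<in> supp x \<Longrightarrow> (\<lambda>N. poly (g N w) s) \<longlonglongrightarrow> poly (g' w) s"
  shows "(\<lambda>N. poly (Fn (g N) x) s) \<longlonglongrightarrow> poly (Fn g' x) s"
  unfolding poly_Fn by (intro tendsto_sum tendsto_mult_left assms)

lemma Sw_adm: "adm u \<Longrightarrow> v \<in> supp (Sw u) \<Longrightarrow> adm v"
proof -
  assume a: "adm u" and v: "v \<in> supp (Sw u)"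
  have p: "(l1 u \<longrightarrow> l1 v) \<and> (u = [] \<longrightarrow> v = []) \<and> (u \<noteq> [] \<longrightarrow> v \<noteq> [] \<and> hd u \<le> hd v)"
    using Sw_props[of u] v by blast
  show "adm v"
  proof (cases "u = []")
    case True then show ?thesis using p by (simp add: adm_def l1_def)
  next
    case False then show ?thesis using p a unfolding adm_def by auto
  qed
qed

lemma starw_adm:
  assumes "adm u" "adm v" "p \<in> supp (starw u v)"
  shows "adm p"
proof (cases u)
  case Nil then show ?thesis using assms by simp
next
  case (Cons a w)
  show ?thesis
  proof (cases v)
    case Nil then show ?thesis using assms Cons by simp
  next
    case (Cons b w')
    have "l1 p" using starw_props[of u v] assms by (auto simp: adm_def)
    moreover obtain c r where "p = c # r" "a \<le> c \<or> b \<le> c"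
      using starw_hd assms(3) Cons \<open>u = a # w\<close> by blast
    ultimately show ?thesis using assms Cons \<open>u = a # w\<close> by (auto simp: adm_def)
  qed
qed

lemma psi_tendsto:
  assumes "adm u"
  shows "(\<lambda>N. poly (psiN N u) s) \<longlonglongrightarrow> poly (psiZ u) s"
  unfolding psiN_def psiZ_def
  by (rule Fn_tendsto) (simp add: phiN_def phiZ_def mzv_lim Sw_adm[OF assms])

lemma psiZ_starw:
  assumes "adm u" "adm v"
  shows "Fn psiZ (starw u v) = psiZ u * psiZ v"
proof -
  have "poly (Fn psiZ (starw u v)) s = poly (psiZ u * psiZ v) s" for s
  proof -
    have A: "(\<lambda>N. poly (Gam N (starw u v)) s) \<longlonglongrightarrow> poly (Fn psiZ (starw u v)) s"
      unfolding Gam_def by (rule Fn_tendsto) (rule psi_tendsto, rule starw_adm[OF assms])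
    have B: "(\<lambda>N. poly (Gam N (starw u v)) s) \<longlonglongrightarrow> poly (psiZ u) s * poly (psiZ v) s"
      unfolding Gam_starw poly_mult by (intro tendsto_mult psi_tendsto assms)
    show ?thesis using LIMSEQ_unique[OF A B] by simp
  qed
  then have "poly (Fn psiZ (starw u v)) = poly (psiZ u * psiZ v)" by (rule ext)
  then show ?thesis by (simp only: poly_eq_poly_eq_iff)
qed

lemma h0t_iff: "x \<in> h0t \<longleftrightarrow> finite (supp x) \<and> (\<forall>w\<in>supp x. adm w)"
  by (auto simp: h0t_def h1t_def adm_def l1_def)

lemma starT_lin: "starT x y = lin (\<lambda>w. lin (starw w) y) x"
  unfolding starT_def lin_def by (simp add: sum_distrib_left mult.assoc)

lemma finite_lin_starw: "finite (supp y) \<Longrightarrow> finite (supp (lin (starw w) y))"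
  by (rule finite_supp_lin) (auto simp: fin_starw)

lemma mzv_Nil: "mzv [] = 1"
proof -
  have "(\<lambda>N. zN N []) \<longlonglongrightarrow> mzv []" by (rule mzv_lim) (simp add: adm_def l1_def)
  then show ?thesis by (simp add: LIMSEQ_const_iff)
qed


lemma starT_h0t:
  assumes "x \<in> h0t" "y \<in> h0t"
  shows "starT x y \<in> h0t"
proof -
  have fx: "finite (supp x)" "\<forall>w\<in>supp x. adm w" and fy: "finite (supp y)" "\<forall>w\<in>supp y. adm w"
    using assms by (auto simp: h0t_iff)
  have sub: "supp (starT x y) \<subseteq> (\<Union>w\<in>supp x. \<Union>w'\<in>supp y. supp (starw w w'))"
    unfolding starT_lin using supp_lin[of "\<lambda>w. lin (starw w) y" x] supp_lin[of "starw _" y] by blast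
  have "finite (\<Union>w\<in>supp x. \<Union>w'\<in>supp y. supp (starw w w'))"
    using fx fy by (auto simp: fin_starw)
  moreover have "\<forall>p\<in>(\<Union>w\<in>supp x. \<Union>w'\<in>supp y. supp (starw w w')). adm p"
    using fx fy starw_adm by blast
  ultimately show ?thesis using sub unfolding h0t_iff by (meson finite_subset subsetD)
qed

lemma St_h0t:
  assumes "x \<in> h0t"
  shows "St x \<in> h0t"
proof -
  have fx: "finite (supp x)" "\<forall>w\<in>supp x. adm w" using assms by (auto simp: h0t_iff)
  have sub: "supp (St x) \<subseteq> (\<Union>w\<in>supp x. supp (Sw w))"
    unfolding St_def by (rule supp_lin)
  have "finite (\<Union>w\<in>supp x. supp (Sw w))" using fx by (auto simp: finite_supp_Sw)
  moreover have "\<forall>p\<in>(\<Union>w\<in>supp x. supp (Sw w)). adm p" using fx Sw_adm by blast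
  ultimately show ?thesis using sub unfolding h0t_iff by (meson finite_subset subsetD)
qed

lemma Zt_starT:
  assumes "x \<in> h0t" "y \<in> h0t"
  shows "Zt (starT x y) = Zt x * Zt y"
proof -
  have fx: "finite (supp x)" "\<forall>w\<in>supp x. adm w" and fy: "finite (supp y)" "\<forall>w\<in>supp y. adm w"
    using assms by (auto simp: h0t_iff)
  have fs: "finite (supp (starT x y))" using starT_h0t[OF assms] by (simp add: h0t_iff)
  have "Zt (starT x y) = Fn psiZ (lin (\<lambda>w. lin (starw w) y) x)"
    using fs by (simp add: Zt_Fn starT_lin)
  also have "\<dots> = (\<Sum>w\<in>supp x. hh (x w) * Fn psiZ (lin (starw w) y))"
    using fx fy by (intro Fn_lin) (auto simp: finite_lin_starw)
  also have "\<dots> = (\<Sum>w\<in>supp x. hh (x w) * (\<Sum>w'\<in>supp y. hh (y w') * (psiZ w * psiZ w')))"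
  proof (rule sum.cong[OF refl])
    fix w assume w: "w \<in> supp x"
    have "Fn psiZ (lin (starw w) y) = (\<Sum>w'\<in>supp y. hh (y w') * Fn psiZ (starw w w'))"
      using fy by (intro Fn_lin) (auto simp: fin_starw)
    also have "\<dots> = (\<Sum>w'\<in>supp y. hh (y w') * (psiZ w * psiZ w'))"
      using fx fy w by (intro sum.cong refl) (simp add: psiZ_starw)
    finally show "hh (x w) * Fn psiZ (lin (starw w) y) = hh (x w) * (\<Sum>w'\<in>supp y. hh (y w') * (psiZ w * psiZ w'))"
      by simp
  qed
  also have "\<dots> = (\<Sum>w\<in>supp x. hh (x w) * psiZ w) * (\<Sum>w'\<in>supp y. hh (y w') * psiZ w')"
    unfolding sum_product by (rule sum.cong[OF refl]) (simp add: sum_distrib_left mult_ac)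
  also have "\<dots> = Zt x * Zt y"
    using fx fy by (simp add: Zt_Fn Fn_def)
  finally show ?thesis .
qed

theorem mainTheorem8:
  shows "(\<forall>x\<in>h0t. \<forall>y\<in>h0t. starT x y \<in> h0t)
    \<and> (\<forall>x\<in>h0t. St x \<in> h0t)
    \<and> Zt (wd []) = 1
    \<and> (\<forall>x\<in>h0t. \<forall>y\<in>h0t. Zt (addf x y) = Zt x + Zt y)
    \<and> (\<forall>c. \<forall>x\<in>h0t. Zt (scal c x) = map_poly of_rat c * Zt x)
    \<and> (\<forall>x\<in>h0t. \<forall>y\<in>h0t. Zt (starT x y) = Zt x * Zt y)"
proof (intro conjI ballI allI)
  fix x y assume "x \<in> h0t" "y \<in> h0t"
  then show "starT x y \<in> h0t" by (rule starT_h0t)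
next
  fix x assume "x \<in> h0t"
  then show "St x \<in> h0t" by (rule St_h0t)
next
  show "Zt (wd []) = 1"
    by (simp add: Zt_Fn psiZ_def phiZ_def mzv_Nil)
next
  fix x y assume "x \<in> h0t" "y \<in> h0t"
  then have f: "finite (supp x)" "finite (supp y)" by (auto simp: h0t_iff)
  then show "Zt (addf x y) = Zt x + Zt y"
    by (simp add: Zt_Fn Fn_add finite_supp_addf)
next
  fix c x assume "x \<in> h0t"
  then have f: "finite (supp x)" by (auto simp: h0t_iff)
  then show "Zt (scal c x) = map_poly of_rat c * Zt x"
    by (simp add: Zt_Fn Fn_scal finite_supp_scal hh_def)
next
  fix x y assume "x \<in> h0t" "y \<in> h0t"
  then show "Zt (starT x y) = Zt x * Zt y" by (rule Zt_starT)
qed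


end
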